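(* For all $n\ge0$, $A_n(z)$ and $B_n(z)$ are rational functions of $z$ with simple poles at $0,t_1,\dots,t_m$, namely \[ A_n(z)=\frac{1-\sum_{k=1}^mR_{n,k}}{z}+\sum_{k=1}^m\frac{R_{n,k}}{z-t_k},\qquad B_n(z)=-\frac{n+\sum_{k=1}^m r_{n,k}}{z}+\sum_{k=1}^m\frac{r_{n,k}}{z-t_k}. \]
   Context: Let $m\ge1$, $\alpha>-1$, $0<t_1<\dots<t_m$, real $\omega_0,\dots,\omega_m$ with $\sum_{k=0}^\ell\omega_k\ge0$ for $\ell=0,\dots,m$, $\theta$ the Heaviside function, $w_0(x)=x^\alpha e^{-x}$, $w(x)=w_0(x)\big(\omega_0+\sum_k\omega_k\theta(x-t_k)\big)$ on $[0,\infty)$, $P_n$ the monic orthogonal polynomials w.r.t. $w$, $h_n=\int_0^\infty P_n^2w\,dx$, $R_{n,k}=\omega_k\frac{w_0(t_k)}{h_n}P_n^2(t_k)$, $r_{n,k}=\omega_k\frac{w_0(t_k)}{h_{n-1}}P_n(t_k)P_{n-1}(t_k)$, and ${\rm v}_0(z)=z-\alpha\ln z$. For $\alpha>0$, $A_n(z)=\frac1{h_n}\int_0^\infty\frac{{\rm v}_0'(z)-{\rm v}_0'(y)}{z-y}P_n^2(y)w(y)dy+\sum_k\frac{R_{n,k}}{z-t_k}$, $B_n(z)=\frac1{h_{n-1}}\int_0^\infty\frac{{\rm v}_0'(z)-{\rm v}_0'(y)}{z-y}P_n(y)P_{n-1}(y)w(y)dy+\sum_k\frac{r_{n,k}}{z-t_k}$;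 for $-1<\alpha\le0$, $A_n(z)=\frac1z\Big(\frac1{h_n}\int_0^\infty\frac{z{\rm v}_0'(z)-y{\rm v}_0'(y)}{z-y}P_n^2(y)w(y)dy-\sum_kR_{n,k}\Big)+\sum_k\frac{R_{n,k}}{z-t_k}$, $B_n(z)=\frac1z\Big(\frac1{h_{n-1}}\int_0^\infty\frac{z{\rm v}_0'(z)-y{\rm v}_0'(y)}{z-y}P_n(y)P_{n-1}(y)w(y)dy-\sum_kr_{n,k}-n\Big)+\sum_k\frac{r_{n,k}}{z-t_k}$. (Convention $r_{0,k}=0$.) *)

theory Defs
  imports "HOL-Analysis.Analysis" "HOL-Computational_Algebra.Polynomial"
begin

text \<open>Heaviside function (value at 0 is irrelevant for all integrals involved).\<close>
definition heaviside :: "real \<Rightarrow> real" where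
  "heaviside x = (if x \<ge> 0 then 1 else 0)"

definition w0 :: "real \<Rightarrow> real \<Rightarrow> real" where
  "w0 \<alpha> x = x powr \<alpha> * exp (- x)"

definition wt :: "real \<Rightarrow> nat \<Rightarrow> (nat \<Rightarrow> real) \<Rightarrow> (nat \<Rightarrow> real) \<Rightarrow> real \<Rightarrow> real" where
  "wt \<alpha> m \<omega> t x = w0 \<alpha> x * (\<omega> 0 + (\<Sum>k=1..m. \<omega> k * heaviside (x - t k)))"

definition Pprev :: "(nat \<Rightarrow> real poly) \<Rightarrow> nat \<Rightarrow> real poly" where
  "Pprev P n = (if n = 0 then 0 else P (n - 1))"

definition hn :: "real \<Rightarrow> nat \<Rightarrow> (nat \<Rightarrow> real) \<Rightarrow> (nat \<Rightarrow> real) \<Rightarrow> (nat \<Rightarrow> real poly) \<Rightarrow> nat \<Rightarrow> real" where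
  "hn \<alpha> m \<omega> t P n = (LINT y:{0..}|lborel. (poly (P n) y)\<^sup>2 * wt \<alpha> m \<omega> t y)"

text \<open>h_{n-1} (equal to 0 for n = 0 by the convention P_{-1} = 0).\<close>
definition hprev :: "real \<Rightarrow> nat \<Rightarrow> (nat \<Rightarrow> real) \<Rightarrow> (nat \<Rightarrow> real) \<Rightarrow> (nat \<Rightarrow> real poly) \<Rightarrow> nat \<Rightarrow> real" where
  "hprev \<alpha> m \<omega> t P n = (LINT y:{0..}|lborel. (poly (Pprev P n) y)\<^sup>2 * wt \<alpha> m \<omega> t y)"

definition Rnk :: "real \<Rightarrow> nat \<Rightarrow> (nat \<Rightarrow> real) \<Rightarrow> (nat \<Rightarrow> real) \<Rightarrow> (nat \<Rightarrow> real poly) \<Rightarrow> nat \<Rightarrow> nat \<Rightarrow> real" where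
  "Rnk \<alpha> m \<omega> t P n k = \<omega> k * w0 \<alpha> (t k) / hn \<alpha> m \<omega> t P n * (poly (P n) (t k))\<^sup>2"

definition rnk :: "real \<Rightarrow> nat \<Rightarrow> (nat \<Rightarrow> real) \<Rightarrow> (nat \<Rightarrow> real) \<Rightarrow> (nat \<Rightarrow> real poly) \<Rightarrow> nat \<Rightarrow> nat \<Rightarrow> real" where
  "rnk \<alpha> m \<omega> t P n k = (if n = 0 then 0 else
     \<omega> k * w0 \<alpha> (t k) / hprev \<alpha> m \<omega> t P n * poly (P n) (t k) * poly (Pprev P n) (t k))"

definition dv0 :: "real \<Rightarrow> complex \<Rightarrow> complex" where
  "dv0 \<alpha> z = 1 - complex_of_real \<alpha> / z"

definition An :: "real \<Rightarrow> nat \<Rightarrow> (nat \<Rightarrow> real) \<Rightarrow> (nat \<Rightarrow> real) \<Rightarrow> (nat \<Rightarrow> real poly) \<Rightarrow> nat \<Rightarrow> complex \<Rightarrow> complex" where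
  "An \<alpha> m \<omega> t P n z =
    (if \<alpha> > 0 then
       complex_of_real (1 / hn \<alpha> m \<omega> t P n) *
         (LINT y:{0..}|lborel. ((dv0 \<alpha> z - dv0 \<alpha> (of_real y)) / (z - of_real y)) *
             of_real ((poly (P n) y)\<^sup>2 * wt \<alpha> m \<omega> t y))
       + (\<Sum>k=1..m. of_real (Rnk \<alpha> m \<omega> t P n k) / (z - of_real (t k)))
     else
       (1 / z) * (complex_of_real (1 / hn \<alpha> m \<omega> t P n) *
         (LINT y:{0..}|lborel. ((z * dv0 \<alpha> z - of_real y * dv0 \<alpha> (of_real y)) / (z - of_real y)) *
             of_real ((poly (P n) y)\<^sup>2 * wt \<alpha> m \<omega> t y))
         - (\<Sum>k=1..m. of_real (Rnk \<alpha> m \<omega> t P n k)))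
       + (\<Sum>k=1..m. of_real (Rnk \<alpha> m \<omega> t P n k) / (z - of_real (t k))))"

definition Bn :: "real \<Rightarrow> nat \<Rightarrow> (nat \<Rightarrow> real) \<Rightarrow> (nat \<Rightarrow> real) \<Rightarrow> (nat \<Rightarrow> real poly) \<Rightarrow> nat \<Rightarrow> complex \<Rightarrow> complex" where
  "Bn \<alpha> m \<omega> t P n z =
    (if \<alpha> > 0 then
       complex_of_real (1 / hprev \<alpha> m \<omega> t P n) *
         (LINT y:{0..}|lborel. ((dv0 \<alpha> z - dv0 \<alpha> (of_real y)) / (z - of_real y)) *
             of_real (poly (P n) y * poly (Pprev P n) y * wt \<alpha> m \<omega> t y))
       + (\<Sum>k=1..m. of_real (rnk \<alpha> m \<omega> t P n k) / (z - of_real (t k)))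
     else
       (1 / z) * (complex_of_real (1 / hprev \<alpha> m \<omega> t P n) *
         (LINT y:{0..}|lborel. ((z * dv0 \<alpha> z - of_real y * dv0 \<alpha> (of_real y)) / (z - of_real y)) *
             of_real (poly (P n) y * poly (Pprev P n) y * wt \<alpha> m \<omega> t y))
         - (\<Sum>k=1..m. of_real (rnk \<alpha> m \<omega> t P n k)) - of_nat n)
       + (\<Sum>k=1..m. of_real (rnk \<alpha> m \<omega> t P n k) / (z - of_real (t k))))"

end

theory Submission
  imports Defs "HOL-Real_Asymp.Real_Asymp"
begin


lemma lim_top: "((\<lambda>y::real. y powr p * exp (- y)) \<longlongrightarrow> 0) at_top"
  by real_asymp

lemma lim_0: "(p::real) > 0 \<Longrightarrow> ((\<lambda>y::real. y powr p) \<longlongrightarrow> 0) (at_right 0)"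
  by real_asymp

lemma int_base:
  assumes "\<beta> > -1"
  shows "set_integrable lborel {0..} (\<lambda>t::real. t powr \<beta> * exp (-t))"
proof -
  have "((\<lambda>t. t powr (\<beta> + 1 - 1) / exp t) has_integral Gamma (\<beta>+1)) {0..}"
    by (rule Gamma_integral_real) (use assms in auto)
  hence "(\<lambda>t::real. t powr \<beta> * exp (-t)) integrable_on {0..}"
    by (auto simp: exp_minus field_simps dest!: has_integral_integrable)
  hence "(\<lambda>t::real. t powr \<beta> * exp (-t)) absolutely_integrable_on {0..}"
    by (rule nonnegative_absolutely_integrable_1) auto
  thus ?thesis unfolding set_integrable_def
    by (subst (asm) integrable_completion) auto
qed



lemma int_poly:
  assumes "\<beta> > -1"
  shows "set_integrable lborel {0..} (\<lambda>t::real. poly Q t * (t powr \<beta> * exp (-t)))"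
proof -
  have eq: "poly Q t * (t powr \<beta> * exp (-t)) =
     (\<Sum>i\<le>degree Q. coeff Q i * ((t powr (\<beta> + real i)) * exp (-t)))" if "t \<in> {0..}" for t
  proof -
    have "t ^ i * t powr \<beta> = t powr (\<beta> + real i)" for i
    proof (cases "t = 0")
      case False with that show ?thesis by (simp add: powr_add powr_realpow)
    qed simp
    have "poly Q t * (t powr \<beta> * exp (-t)) = (\<Sum>i\<le>degree Q. coeff Q i * (t ^ i * t powr \<beta>) * exp (-t))"
      by (simp add: poly_altdef sum_distrib_right sum_distrib_left mult_ac)
    also have "\<dots> = (\<Sum>i\<le>degree Q. coeff Q i * ((t powr (\<beta> + real i)) * exp (-t)))"
      by (rule sum.cong) (auto simp: \<open>\<And>i. t ^ i * t powr \<beta> = t powr (\<beta> + real i)\<close>)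
    finally show ?thesis .
  qed
  have "set_integrable lborel {0..} (\<lambda>t::real. (\<Sum>i\<le>degree Q. coeff Q i * ((t powr (\<beta> + real i)) * exp (-t))))"
    unfolding set_integrable_def
    apply (simp only: scaleR_sum_right)
    apply (intro Bochner_Integration.integrable_sum)
    subgoal for i
      using integrable_mult_right[OF int_base[of "\<beta> + real i", unfolded set_integrable_def], of "coeff Q i"] assms
      by (auto simp: mult_ac)
    done
  thus ?thesis
    by (rule set_integrable_cong[THEN iffD1, rotated -1]) (auto simp: eq)
qed



lemma set_integrable_sum':
  fixes f :: "'i \<Rightarrow> 'a \<Rightarrow> real"
  shows "(\<And>i. i\<in>I \<Longrightarrow> set_integrable M A (f i)) \<Longrightarrow> set_integrable M A (\<lambda>x. \<Sum>i\<in>I. f i x)"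
  unfolding set_integrable_def by (simp only: scaleR_sum_right) (rule Bochner_Integration.integrable_sum)

lemma set_integral_sum':
  fixes f :: "'i \<Rightarrow> 'a \<Rightarrow> real"
  shows "(\<And>i. i\<in>I \<Longrightarrow> set_integrable M A (f i)) \<Longrightarrow>
    (LINT x:A|M. (\<Sum>i\<in>I. f i x)) = (\<Sum>i\<in>I. LINT x:A|M. f i x)"
  unfolding set_integrable_def set_lebesgue_integral_def
  by (simp only: scaleR_sum_right) (rule Bochner_Integration.integral_sum)

lemma int_w0:
  assumes "\<alpha> > -1"
  shows "set_integrable lborel {0..} (\<lambda>y. poly Q y * w0 \<alpha> y)"
  using int_poly[OF assms, of Q] by (simp add: w0_def)

lemma int_w0_div:
  assumes "\<alpha> > 0"
  shows "set_integrable lborel {0..} (\<lambda>y. poly Q y / y * w0 \<alpha> y)"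
proof -
  have "set_integrable lborel {0..} (\<lambda>y. poly Q y * (y powr (\<alpha> - 1) * exp (-y)))"
    by (rule int_poly) (use assms in auto)
  moreover have "poly Q y * (y powr (\<alpha> - 1) * exp (-y)) = poly Q y / y * w0 \<alpha> y" if "y \<in> {0..}" for y
  proof (cases "y = 0")
    case False
    with that have "y powr (\<alpha> - 1) = y powr \<alpha> / y" by (simp add: powr_diff)
    thus ?thesis by (simp add: w0_def)
  qed (simp add: w0_def)
  ultimately show ?thesis
    using set_integrable_cong[OF refl refl, of "{0..}" "\<lambda>y. poly Q y * (y powr (\<alpha> - 1) * exp (-y))" "\<lambda>y. poly Q y / y * w0 \<alpha> y" lborel]
    by blast
qed

lemma heav:
  assumes "c \<ge> 0" "set_integrable lborel {0..} (g :: real \<Rightarrow> real)"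
  shows "set_integrable lborel {0..} (\<lambda>y. heaviside (y - c) * g y)"
    and "(LINT y:{0..}|lborel. heaviside (y - c) * g y) = (LINT y:{c..}|lborel. g y)"
proof -
  have eq: "(\<lambda>y. indicat_real {0..} y *\<^sub>R (heaviside (y - c) * g y)) = (\<lambda>y. indicat_real {c..} y *\<^sub>R g y)"
    using assms(1) by (auto simp: heaviside_def indicator_def fun_eq_iff)
  have "set_integrable lborel {c..} g"
    by (rule set_integrable_subset[OF assms(2)]) (use assms(1) in auto)
  thus "set_integrable lborel {0..} (\<lambda>y. heaviside (y - c) * g y)"
    unfolding set_integrable_def eq .
  show "(LINT y:{0..}|lborel. heaviside (y - c) * g y) = (LINT y:{c..}|lborel. g y)"
    unfolding set_lebesgue_integral_def eq ..
qed

lemma decomp: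
  assumes tpos: "\<forall>k\<in>{1..m}. t k \<ge> 0" and fi: "set_integrable lborel {0..} (\<lambda>y. f y * w0 \<alpha> y)"
  shows "set_integrable lborel {0..} (\<lambda>y. f y * wt \<alpha> m \<omega> t y)"
    and "(LINT y:{0..}|lborel. f y * wt \<alpha> m \<omega> t y) = \<omega> 0 * (LINT y:{0..}|lborel. f y * w0 \<alpha> y)
          + (\<Sum>k=1..m. \<omega> k * (LINT y:{t k..}|lborel. f y * w0 \<alpha> y))"
proof -
  have eq: "f y * wt \<alpha> m \<omega> t y = \<omega> 0 * (f y * w0 \<alpha> y) +
     (\<Sum>k=1..m. \<omega> k * (heaviside (y - t k) * (f y * w0 \<alpha> y)))" for y
    by (simp add: wt_def sum_distrib_left sum_distrib_right algebra_simps)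
  have hi: "set_integrable lborel {0..} (\<lambda>y. \<omega> k * (heaviside (y - t k) * (f y * w0 \<alpha> y)))"
    if "k \<in> {1..m}" for k
    using heav(1)[OF _ fi, of "t k"] tpos that by auto
  have s: "set_integrable lborel {0..} (\<lambda>y. (\<Sum>k=1..m. \<omega> k * (heaviside (y - t k) * (f y * w0 \<alpha> y))))"
    by (rule set_integrable_sum') (rule hi)
  show "set_integrable lborel {0..} (\<lambda>y. f y * wt \<alpha> m \<omega> t y)"
    unfolding eq using s fi by (intro set_integral_add(1)) auto
  have "(LINT y:{0..}|lborel. f y * wt \<alpha> m \<omega> t y) =
     (LINT y:{0..}|lborel. \<omega> 0 * (f y * w0 \<alpha> y)) + (LINT y:{0..}|lborel. (\<Sum>k=1..m. \<omega> k * (heaviside (y - t k) * (f y * w0 \<alpha> y))))"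
    unfolding eq using s fi by (intro set_integral_add(2)) auto
  also have "(LINT y:{0..}|lborel. (\<Sum>k=1..m. \<omega> k * (heaviside (y - t k) * (f y * w0 \<alpha> y))))
     = (\<Sum>k=1..m. LINT y:{0..}|lborel. \<omega> k * (heaviside (y - t k) * (f y * w0 \<alpha> y)))"
    by (rule set_integral_sum') (rule hi)
  also have "\<dots> = (\<Sum>k=1..m. \<omega> k * (LINT y:{t k..}|lborel. f y * w0 \<alpha> y))"
    apply (rule sum.cong, simp)
    using heav(2)[OF _ fi] tpos by auto
  finally show "(LINT y:{0..}|lborel. f y * wt \<alpha> m \<omega> t y) = \<omega> 0 * (LINT y:{0..}|lborel. f y * w0 \<alpha> y)
          + (\<Sum>k=1..m. \<omega> k * (LINT y:{t k..}|lborel. f y * w0 \<alpha> y))" by simp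
qed



lemma F_top: "((\<lambda>y. poly Q y * w0 \<alpha> y) \<longlongrightarrow> 0) at_top"
proof -
  have "((\<lambda>y. \<Sum>i\<le>degree Q. coeff Q i * (y powr (\<alpha> + real i) * exp (-y))) \<longlongrightarrow> (\<Sum>i\<le>degree Q. coeff Q i * 0)) at_top"
    by (intro tendsto_sum tendsto_mult tendsto_const lim_top)
  hence *: "((\<lambda>y. \<Sum>i\<le>degree Q. coeff Q i * (y powr (\<alpha> + real i) * exp (-y))) \<longlongrightarrow> 0) at_top" by simp
  have "eventually (\<lambda>y. (\<Sum>i\<le>degree Q. coeff Q i * (y powr (\<alpha> + real i) * exp (-y))) = poly Q y * w0 \<alpha> y) at_top"
    using eventually_gt_at_top[of 0]
  proof eventually_elim
    case (elim y)
    have "(\<Sum>i\<le>degree Q. coeff Q i * (y powr (\<alpha> + real i) * exp (-y))) =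
          (\<Sum>i\<le>degree Q. coeff Q i * y ^ i * (y powr \<alpha> * exp (-y)))"
      by (rule sum.cong) (use elim in \<open>auto simp: powr_add powr_realpow\<close>)
    also have "\<dots> = poly Q y * w0 \<alpha> y"
      by (simp add: poly_altdef sum_distrib_right w0_def)
    finally show ?case .
  qed
  from tendsto_cong[OF this] * show ?thesis by simp
qed

lemma F_right:
  assumes "\<alpha> > 0" "a \<ge> 0"
  shows "((\<lambda>y. poly Q y * w0 \<alpha> y) \<longlongrightarrow> poly Q a * w0 \<alpha> a) (at_right a)"
proof (cases "a = 0")
  case True
  have "((\<lambda>y. poly Q y * (y powr \<alpha> * exp (-y))) \<longlongrightarrow> poly Q 0 * (0 * exp (-0))) (at_right 0)"
    by (intro tendsto_intros lim_0 assms)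
  thus ?thesis using True by (simp add: w0_def)
next
  case False
  with assms have "a > 0" by simp
  have "isCont (\<lambda>y. poly Q y * w0 \<alpha> y) a"
    unfolding w0_def using \<open>a > 0\<close> by (intro continuous_intros) auto
  thus ?thesis by (simp add: isCont_def filterlim_at_split)
qed

lemma F_deriv:
  assumes "y > 0"
  shows "((\<lambda>y. poly Q y * w0 \<alpha> y) has_real_derivative
    (poly (pderiv Q) y * w0 \<alpha> y + \<alpha> * (poly Q y / y * w0 \<alpha> y) - poly Q y * w0 \<alpha> y)) (at y)"
proof -
  have de: "((\<lambda>y. exp (-y)) has_real_derivative exp (-y) * (-1)) (at y)"
    by (auto intro!: derivative_eq_intros)
  have "((\<lambda>y. poly Q y * (y powr \<alpha> * exp (-y))) has_real_derivative
    (poly (pderiv Q) y * (y powr \<alpha> * exp (-y)) + poly Q y * ((\<alpha> * y powr (\<alpha> - 1)) * exp (-y) + y powr \<alpha> * (exp (-y) * (-1))))) (at y)"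
    by (rule DERIV_cong[OF DERIV_mult[OF poly_DERIV DERIV_mult[OF has_real_derivative_powr[OF assms] de]]]) (simp add: algebra_simps)
  moreover have "y powr (\<alpha> - 1) = y powr \<alpha> / y" using assms by (simp add: powr_diff)
  ultimately show ?thesis by (simp add: w0_def algebra_simps)
qed



lemma Ici_Ioi:
  "(LINT y:{(a::real)<..}|lborel. (f y :: real)) = (LINT y:{a..}|lborel. f y)"
  by (rule set_integral_discrete_difference[where X="{a}"]) (auto simp: less_le)

lemma ftc:
  assumes a0: "\<alpha> > 0" and "a \<ge> 0"
  shows "\<alpha> * (LINT y:{a..}|lborel. poly Q y / y * w0 \<alpha> y) =
    (LINT y:{a..}|lborel. poly Q y * w0 \<alpha> y) - (LINT y:{a..}|lborel. poly (pderiv Q) y * w0 \<alpha> y)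
    - poly Q a * w0 \<alpha> a"
proof -
  define f where "f y = poly (pderiv Q) y * w0 \<alpha> y + \<alpha> * (poly Q y / y * w0 \<alpha> y) - poly Q y * w0 \<alpha> y" for y
  have sub: "{a..} \<subseteq> {0..}" using assms by auto
  have i1: "set_integrable lborel {a..} (\<lambda>y. poly (pderiv Q) y * w0 \<alpha> y)"
    by (rule set_integrable_subset[OF int_w0 _ sub]) (use a0 in auto)
  have i2: "set_integrable lborel {a..} (\<lambda>y. poly Q y / y * w0 \<alpha> y)"
    by (rule set_integrable_subset[OF int_w0_div _ sub]) (use a0 in auto)
  have i3: "set_integrable lborel {a..} (\<lambda>y. poly Q y * w0 \<alpha> y)"
    by (rule set_integrable_subset[OF int_w0 _ sub]) (use a0 in auto)
  have fi: "set_integrable lborel {a..} f"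
    unfolding f_def using i1 i2 i3 by (intro set_integral_diff(1) set_integral_add(1) set_integrable_mult_right) auto
  have fi': "set_integrable lborel (einterval (ereal a) \<infinity>) f"
    by (rule set_integrable_subset[OF fi]) (auto simp: einterval_def)
  have "(LBINT x=ereal a..\<infinity>. f x) = 0 - poly Q a * w0 \<alpha> a"
  proof (rule interval_integral_FTC_integrable[where F="\<lambda>y. poly Q y * w0 \<alpha> y"])
    fix x assume "ereal a < ereal x" "ereal x < \<infinity>"
    hence "x > 0" using assms by auto
    show "((\<lambda>y. poly Q y * w0 \<alpha> y) has_vector_derivative f x) (at x)"
      using F_deriv[OF \<open>x > 0\<close>, of Q \<alpha>] unfolding f_def
      by (simp add: has_real_derivative_iff_has_vector_derivative)
    show "isCont f x" unfolding f_def w0_def using \<open>x > 0\<close>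
      by (intro continuous_intros) auto
  next
    show "(((\<lambda>y. poly Q y * w0 \<alpha> y) \<circ> real_of_ereal) \<longlongrightarrow> poly Q a * w0 \<alpha> a) (at_right (ereal a))"
      unfolding ereal_tendsto_simps1 by (rule F_right) fact+
    show "(((\<lambda>y. poly Q y * w0 \<alpha> y) \<circ> real_of_ereal) \<longlongrightarrow> 0) (at_left \<infinity>)"
      unfolding ereal_tendsto_simps1 by (rule F_top)
  qed (use fi' in auto)
  moreover have "(LBINT x=ereal a..\<infinity>. f x) = (LINT y:{a..}|lborel. f y)"
    by (simp add: interval_lebesgue_integral_def einterval_def Ici_Ioi[symmetric] greaterThan_def)
  moreover have "(LINT y:{a..}|lborel. f y) = (LINT y:{a..}|lborel. poly (pderiv Q) y * w0 \<alpha> y)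
      + \<alpha> * (LINT y:{a..}|lborel. poly Q y / y * w0 \<alpha> y) - (LINT y:{a..}|lborel. poly Q y * w0 \<alpha> y)"
  proof -
    have ia: "set_integrable lborel {a..} (\<lambda>y. poly (pderiv Q) y * w0 \<alpha> y + \<alpha> * (poly Q y / y * w0 \<alpha> y))"
      by (intro set_integral_add(1) set_integrable_mult_right i1 i2)
    have "(LINT y:{a..}|lborel. f y) = (LINT y:{a..}|lborel. poly (pderiv Q) y * w0 \<alpha> y + \<alpha> * (poly Q y / y * w0 \<alpha> y))
       - (LINT y:{a..}|lborel. poly Q y * w0 \<alpha> y)"
      unfolding f_def by (rule set_integral_diff(2)[OF ia i3])
    also have "(LINT y:{a..}|lborel. poly (pderiv Q) y * w0 \<alpha> y + \<alpha> * (poly Q y / y * w0 \<alpha> y))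
       = (LINT y:{a..}|lborel. poly (pderiv Q) y * w0 \<alpha> y) + (LINT y:{a..}|lborel. \<alpha> * (poly Q y / y * w0 \<alpha> y))"
      by (rule set_integral_add(2)[OF i1 set_integrable_mult_right[OF i2]])
    also have "(LINT y:{a..}|lborel. \<alpha> * (poly Q y / y * w0 \<alpha> y)) = \<alpha> * (LINT y:{a..}|lborel. poly Q y / y * w0 \<alpha> y)"
      by (rule set_integral_mult_right)
    finally show ?thesis .
  qed
  ultimately show ?thesis by linarith
qed



lemma wtint:
  assumes "\<alpha> > -1" "\<forall>k\<in>{1..m}. t k \<ge> 0"
  shows "set_integrable lborel {0..} (\<lambda>y. poly X y * wt \<alpha> m \<omega> t y)"
  by (rule decomp(1)[OF assms(2) int_w0[OF assms(1)]])

lemma IBP: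
  assumes a0: "\<alpha> > 0" and tpos: "\<forall>k\<in>{1..m}. t k \<ge> 0"
  shows "\<alpha> * (LINT y:{0..}|lborel. poly X y / y * wt \<alpha> m \<omega> t y) =
    (LINT y:{0..}|lborel. poly X y * wt \<alpha> m \<omega> t y) - (LINT y:{0..}|lborel. poly (pderiv X) y * wt \<alpha> m \<omega> t y)
    - (\<Sum>k=1..m. \<omega> k * w0 \<alpha> (t k) * poly X (t k))"
proof -
  have a1: "\<alpha> > -1" using a0 by simp
  note dJ = decomp(2)[OF tpos int_w0_div[OF a0, of X], of \<omega>]
  note dI = decomp(2)[OF tpos int_w0[OF a1, of X], of \<omega>]
  note dD = decomp(2)[OF tpos int_w0[OF a1, of "pderiv X"], of \<omega>]
  have w00: "w0 \<alpha> 0 = 0" by (simp add: w0_def)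
  have f0: "\<alpha> * (LINT y:{0..}|lborel. poly X y / y * w0 \<alpha> y) =
    (LINT y:{0..}|lborel. poly X y * w0 \<alpha> y) - (LINT y:{0..}|lborel. poly (pderiv X) y * w0 \<alpha> y)"
    using ftc[OF a0 order_refl, of X] by (simp add: w00)
  have fk: "\<alpha> * (\<omega> k * (LINT y:{t k..}|lborel. poly X y / y * w0 \<alpha> y)) =
    \<omega> k * (LINT y:{t k..}|lborel. poly X y * w0 \<alpha> y) - \<omega> k * (LINT y:{t k..}|lborel. poly (pderiv X) y * w0 \<alpha> y)
    - \<omega> k * w0 \<alpha> (t k) * poly X (t k)" if "k \<in> {1..m}" for k
  proof -
    have e: "\<alpha> * (LINT y:{t k..}|lborel. poly X y / y * w0 \<alpha> y) =
      (LINT y:{t k..}|lborel. poly X y * w0 \<alpha> y) - (LINT y:{t k..}|lborel. poly (pderiv X) y * w0 \<alpha> y)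
      - poly X (t k) * w0 \<alpha> (t k)"
      using ftc[OF a0, of "t k" X] tpos that by auto
    have "\<alpha> * (\<omega> k * (LINT y:{t k..}|lborel. poly X y / y * w0 \<alpha> y)) = \<omega> k * (\<alpha> * (LINT y:{t k..}|lborel. poly X y / y * w0 \<alpha> y))"
      by (simp add: mult_ac)
    also have "\<dots> = \<omega> k * ((LINT y:{t k..}|lborel. poly X y * w0 \<alpha> y) - (LINT y:{t k..}|lborel. poly (pderiv X) y * w0 \<alpha> y)
      - poly X (t k) * w0 \<alpha> (t k))" by (simp only: e)
    finally show ?thesis by (simp add: algebra_simps)
  qed
  have "\<alpha> * (LINT y:{0..}|lborel. poly X y / y * wt \<alpha> m \<omega> t y) =
     \<omega> 0 * (\<alpha> * (LINT y:{0..}|lborel. poly X y / y * w0 \<alpha> y)) +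
     (\<Sum>k=1..m. \<alpha> * (\<omega> k * (LINT y:{t k..}|lborel. poly X y / y * w0 \<alpha> y)))"
    unfolding dJ by (simp add: algebra_simps sum_distrib_left)
  also have "\<dots> = \<omega> 0 * ((LINT y:{0..}|lborel. poly X y * w0 \<alpha> y) - (LINT y:{0..}|lborel. poly (pderiv X) y * w0 \<alpha> y)) +
     (\<Sum>k=1..m. \<omega> k * (LINT y:{t k..}|lborel. poly X y * w0 \<alpha> y) - \<omega> k * (LINT y:{t k..}|lborel. poly (pderiv X) y * w0 \<alpha> y)
    - \<omega> k * w0 \<alpha> (t k) * poly X (t k))"
    by (simp only: f0 sum.cong[OF refl fk])
  also have "\<dots> = (LINT y:{0..}|lborel. poly X y * wt \<alpha> m \<omega> t y) - (LINT y:{0..}|lborel. poly (pderiv X) y * wt \<alpha> m \<omega> t y)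
    - (\<Sum>k=1..m. \<omega> k * w0 \<alpha> (t k) * poly X (t k))"
    unfolding dI dD by (simp add: sum_subtractf sum.distrib algebra_simps)
  finally show ?thesis .
qed



lemma coeff_aux: "(\<forall>j\<ge>d. coeff R j = 0) \<Longrightarrow> R = 0 \<or> degree R < d"
  by (metis leading_coeff_0_iff not_less)

lemma wtint2:
  assumes "\<alpha> > -1" "\<forall>k\<in>{1..m}. t k \<ge> 0"
  shows "set_integrable lborel {0..} (\<lambda>y. poly A y * poly B y * wt \<alpha> m \<omega> t y)"
  using wtint[OF assms, of "A * B" \<omega>] by simp

lemma orth:
  assumes a1: "\<alpha> > -1" and tpos: "\<forall>k\<in>{1..m}. t k \<ge> 0"
    and mon: "\<forall>n. degree (P n) = n \<and> lead_coeff (P n) = 1"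
    and ort: "\<forall>i j. i \<noteq> j \<longrightarrow>
           (LINT y:{0..}|lborel. poly (P i) y * poly (P j) y * wt \<alpha> m \<omega> t y) = 0"
  shows "Q = 0 \<or> degree Q < n \<Longrightarrow> (LINT y:{0..}|lborel. poly Q y * poly (P n) y * wt \<alpha> m \<omega> t y) = 0"
proof (induction Q rule: measure_induct_rule[where f=degree])
  case (less Q)
  show ?case
  proof (cases "Q = 0")
    case True thus ?thesis by simp
  next
    case False
    with less.prems have dn: "degree Q < n" by simp
    define d where "d = degree Q"
    define c where "c = lead_coeff Q"
    define R where "R = Q - smult c (P d)"
    have "\<forall>j\<ge>d. coeff R j = 0"
    proof (intro allI impI)
      fix j assume "d \<le> j"
      show "coeff R j = 0"
      proof (cases "j = d")
        case True
        have "coeff (P d) d = 1" using mon[rule_format, of d] by metis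
        thus ?thesis using True unfolding R_def c_def d_def by simp
      next
        case False
        with \<open>d \<le> j\<close> have "j > d" by simp
        hence "coeff Q j = 0" "coeff (P d) j = 0" using mon unfolding d_def
          by (auto intro: coeff_eq_0)
        thus ?thesis unfolding R_def by simp
      qed
    qed
    hence R: "R = 0 \<or> degree R < d" by (rule coeff_aux)
    hence IH: "(LINT y:{0..}|lborel. poly R y * poly (P n) y * wt \<alpha> m \<omega> t y) = 0"
      using less.IH[of R] dn unfolding d_def by auto
    have dne: "d \<noteq> n" using dn d_def by simp
    have eq: "poly Q y * poly (P n) y * wt \<alpha> m \<omega> t y =
       c * (poly (P d) y * poly (P n) y * wt \<alpha> m \<omega> t y) + poly R y * poly (P n) y * wt \<alpha> m \<omega> t y" for y
      unfolding R_def by (simp add: algebra_simps)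
    have "(LINT y:{0..}|lborel. poly Q y * poly (P n) y * wt \<alpha> m \<omega> t y) =
        (LINT y:{0..}|lborel. c * (poly (P d) y * poly (P n) y * wt \<alpha> m \<omega> t y)) +
        (LINT y:{0..}|lborel. poly R y * poly (P n) y * wt \<alpha> m \<omega> t y)"
      unfolding eq
      by (rule set_integral_add(2)[OF set_integrable_mult_right[OF wtint2[OF a1 tpos]] wtint2[OF a1 tpos]])
    also have "\<dots> = 0" using IH ort dne by simp
    finally show ?thesis .
  qed
qed



lemma tmono:
  assumes inc: "\<forall>k. 1 \<le> k \<and> k < m \<longrightarrow> t k < t (Suc k)"
  shows "1 \<le> i \<Longrightarrow> i < j \<Longrightarrow> j \<le> m \<Longrightarrow> (t i :: real) < t j"
proof (induction j)
  case 0 thus ?case by simp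
next
  case (Suc j)
  show ?case
  proof (cases "i = j")
    case True thus ?thesis using inc Suc.prems by auto
  next
    case False
    hence "t i < t j" using Suc by auto
    also have "t j < t (Suc j)" using inc Suc.prems False by auto
    finally show ?thesis .
  qed
qed

lemma wt_form:
  assumes "L \<le> m" "\<forall>k\<in>{1..m}. t k \<le> y \<longleftrightarrow> k \<le> L"
  shows "wt \<alpha> m \<omega> t y = w0 \<alpha> y * (\<Sum>k\<le>L. \<omega> k)"
proof -
  have "(\<Sum>k=1..m. \<omega> k * heaviside (y - t k)) = (\<Sum>k=1..m. if k \<in> {..L} then \<omega> k else 0)"
    by (rule sum.cong) (use assms(2) in \<open>auto simp: heaviside_def\<close>)
  also have "\<dots> = (\<Sum>k\<in>{1..m} \<inter> {..L}. \<omega> k)" by (rule sum.inter_restrict[symmetric]) simp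
  also have "{1..m} \<inter> {..L} = {1..L}" using assms(1) by auto
  finally have "\<omega> 0 + (\<Sum>k=1..m. \<omega> k * heaviside (y - t k)) = \<omega> 0 + (\<Sum>k=1..L. \<omega> k)" by simp
  also have "\<dots> = (\<Sum>k\<le>L. \<omega> k)"
  proof -
    have "{..L} = insert 0 {1..L}" by auto
    thus ?thesis by simp
  qed
  finally show ?thesis by (simp add: wt_def)
qed

lemma wt_nonneg:
  assumes inc: "\<forall>k. 1 \<le> k \<and> k < m \<longrightarrow> t k < t (Suc k)"
    and om: "\<forall>l\<le>m. (\<Sum>k\<le>l. \<omega> k) \<ge> 0" and y: "y \<ge> 0"
  shows "wt \<alpha> m \<omega> t y \<ge> 0"
proof -
  define S where "S = {k\<in>{1..m}. t k \<le> y}"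
  define L where "L = Max (insert 0 S)"
  have fin: "finite (insert 0 S)" unfolding S_def by auto
  have Lm: "L \<le> m" unfolding L_def using fin by (subst Max_le_iff) (auto simp: S_def)
  have "\<forall>k\<in>{1..m}. t k \<le> y \<longleftrightarrow> k \<le> L"
  proof
    fix k assume k: "k \<in> {1..m}"
    show "t k \<le> y \<longleftrightarrow> k \<le> L"
    proof
      assume "t k \<le> y" thus "k \<le> L" unfolding L_def using fin k by (intro Max_ge) (auto simp: S_def)
    next
      assume kL: "k \<le> L"
      have "L \<in> insert 0 S" unfolding L_def using fin by (rule Max_in) simp
      moreover have "L \<noteq> 0" using kL k by auto
      ultimately have "L \<in> S" by simp
      hence "t L \<le> y" "L \<in> {1..m}" by (auto simp: S_def)
      moreover have "t k \<le> t L" using tmono[OF inc, of k L] kL k \<open>L \<in> {1..m}\<close>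
        by (cases "k = L") auto
      ultimately show "t k \<le> y" by simp
    qed
  qed
  from wt_form[OF Lm this] have "wt \<alpha> m \<omega> t y = w0 \<alpha> y * (\<Sum>k\<le>L. \<omega> k)" .
  moreover have "w0 \<alpha> y \<ge> 0" by (simp add: w0_def)
  ultimately show ?thesis using om Lm by simp
qed

lemma h_pos:
  assumes a1: "\<alpha> > -1" and t1: "0 < t 1" and inc: "\<forall>k. 1 \<le> k \<and> k < m \<longrightarrow> t k < t (Suc k)"
    and om: "\<forall>l\<le>m. (\<Sum>k\<le>l. \<omega> k) \<ge> 0" and om2: "\<exists>l\<le>m. (\<Sum>k\<le>l. \<omega> k) > 0"
    and Q: "Q \<noteq> 0"
  shows "(LINT y:{0..}|lborel. (poly Q y)\<^sup>2 * wt \<alpha> m \<omega> t y) > 0"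
proof -
  have tpos: "\<forall>k\<in>{1..m}. t k > 0"
  proof
    fix k assume k: "k \<in> {1..m}"
    show "t k > 0"
    proof (cases "k = 1")
      case True thus ?thesis using t1 by simp
    next
      case False thus ?thesis using tmono[OF inc, of 1 k] k t1 by auto
    qed
  qed
  hence tnn: "\<forall>k\<in>{1..m}. t k \<ge> 0" by auto
  obtain l where l: "l \<le> m" "(\<Sum>k\<le>l. \<omega> k) > 0" using om2 by auto
  define lo where "lo = (if l = 0 then 0 else t l)"
  define hi where "hi = (if l = m then lo + 1 else t (Suc l))"
  have lo0: "lo \<ge> 0" unfolding lo_def using tpos l by (cases "l = 0") (auto intro: less_imp_le)
  have lohi: "lo < hi" unfolding hi_def lo_def using tpos l tmono[OF inc, of l "Suc l"] by auto
  have wpos: "wt \<alpha> m \<omega> t y > 0" if y: "lo < y" "y < hi" for y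
  proof -
    have "\<forall>k\<in>{1..m}. t k \<le> y \<longleftrightarrow> k \<le> l"
    proof
      fix k assume k: "k \<in> {1..m}"
      show "t k \<le> y \<longleftrightarrow> k \<le> l"
      proof
        assume "t k \<le> y"
        show "k \<le> l"
        proof (rule ccontr)
          assume "\<not> k \<le> l"
          hence "l < m" "Suc l \<le> k" using k by auto
          hence "t (Suc l) \<le> t k" using tmono[OF inc, of "Suc l" k] k by (cases "Suc l = k") auto
          with \<open>t k \<le> y\<close> y \<open>l < m\<close> show False unfolding hi_def by auto
        qed
      next
        assume "k \<le> l"
        hence "t k \<le> t l" using tmono[OF inc, of k l] k l by (cases "k = l") auto
        thus "t k \<le> y" using y \<open>k \<le> l\<close> k unfolding lo_def by auto
      qed
    qed
    from wt_form[OF l(1) this] have "wt \<alpha> m \<omega> t y = w0 \<alpha> y * (\<Sum>k\<le>l. \<omega> k)" .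
    moreover have "w0 \<alpha> y > 0" using y lo0 by (simp add: w0_def)
    ultimately show ?thesis using l by simp
  qed
  define g where "g y = indicat_real {0..} y *\<^sub>R ((poly Q y)\<^sup>2 * wt \<alpha> m \<omega> t y)" for y
  have gi: "integrable lborel g"
    using wtint2[OF a1 tnn, of Q Q \<omega>] unfolding g_def set_integrable_def by (simp add: power2_eq_square)
  have gnn: "AE y in lborel. 0 \<le> g y"
    using wt_nonneg[OF inc om] by (auto simp: g_def indicator_def)
  have "(LINT y:{0..}|lborel. (poly Q y)\<^sup>2 * wt \<alpha> m \<omega> t y) = integral\<^sup>L lborel g"
    unfolding set_lebesgue_integral_def g_def by (rule refl)
  moreover have "integral\<^sup>L lborel g \<ge> 0" using gnn by (rule integral_nonneg_AE)
  moreover have "integral\<^sup>L lborel g \<noteq> 0"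
  proof
    assume "integral\<^sup>L lborel g = 0"
    hence ae: "AE y in lborel. g y = 0" using integral_nonneg_eq_0_iff_AE[OF gi gnn] by simp
    have ae2: "AE y in lborel. y \<notin> {y. poly Q y = 0}"
      by (intro AE_not_in finite_imp_null_set_lborel poly_roots_finite Q)
    have "AE y in lborel. y \<notin> {lo<..<hi}"
      using ae ae2
    proof eventually_elim
      case (elim y)
      show ?case
      proof
        assume y: "y \<in> {lo<..<hi}"
        hence "wt \<alpha> m \<omega> t y > 0" using wpos by auto
        moreover have "(poly Q y)\<^sup>2 > 0" using elim by simp
        moreover have "y \<in> {0..}" using y lo0 by auto
        ultimately have "g y > 0" by (simp add: g_def)
        thus False using elim by simp
      qed
    qed
    hence "emeasure lborel {lo<..<hi} = 0"
      by (subst (asm) AE_iff_measurable[OF _ refl]) (auto simp: set_diff_eq greaterThanLessThan_def greaterThan_def lessThan_def Int_def)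
    thus False using lohi by simp
  qed
  ultimately show ?thesis by simp
qed



lemma cint: "(LINT y:A|lborel. c * complex_of_real (g y)) = c * of_real (LINT y:A|lborel. g y)"
proof -
  have "(LINT y:A|lborel. c * complex_of_real (g y)) = integral\<^sup>L lborel (\<lambda>y. c * complex_of_real (indicat_real A y *\<^sub>R g y))"
    unfolding set_lebesgue_integral_def by (rule Bochner_Integration.integral_cong) (auto simp: indicator_def)
  also have "\<dots> = c * of_real (LINT y:A|lborel. g y)"
    unfolding set_lebesgue_integral_def by (simp only: integral_mult_right_zero integral_complex_of_real)
  finally show ?thesis .
qed

lemma lint_cong_fin:
  assumes "finite X" "\<And>y. y \<in> A \<Longrightarrow> y \<notin> X \<Longrightarrow> f y = g y"
  shows "(LINT y:A|lborel. f y) = (LINT y:A|lborel. (g y :: complex))"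
  unfolding set_lebesgue_integral_def
  by (rule integral_discrete_difference[where X=X]) (use assms in \<open>auto intro: countable_finite simp: indicator_def\<close>)

lemma pderiv_lt: "n > 0 \<Longrightarrow> degree p = n \<Longrightarrow> degree (pderiv (p :: real poly)) < n"
  by (simp add: degree_pderiv)

lemma pderiv_mon:
  assumes "degree p = Suc N" "lead_coeff p = 1" "degree q = N" "lead_coeff q = (1::real)"
  shows "\<forall>j\<ge>N. coeff (pderiv p - smult (of_nat (Suc N)) q) j = 0"
proof (intro allI impI)
  fix j assume "N \<le> j"
  show "coeff (pderiv p - smult (of_nat (Suc N)) q) j = 0"
  proof (cases "j = N")
    case True thus ?thesis using assms by (simp add: coeff_pderiv)
  next
    case False
    hence "j > N" using \<open>N \<le> j\<close> by simp
    hence "coeff p (Suc j) = 0" "coeff q j = 0" using assms by (auto intro: coeff_eq_0)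
    thus ?thesis by (simp add: coeff_pderiv)
  qed
qed



lemma K1:
  assumes "z \<noteq> 0" "y \<noteq> 0" "complex_of_real y \<noteq> z"
  shows "(dv0 \<alpha> z - dv0 \<alpha> (of_real y)) / (z - of_real y) * of_real g = of_real \<alpha> / z * of_real (g / y)"
proof -
  have "z - of_real y \<noteq> 0" using assms by simp
  moreover have "complex_of_real y \<noteq> 0" using assms by simp
  ultimately show ?thesis using assms(1) unfolding dv0_def
    by (simp add: field_simps)
qed

lemma K2:
  assumes "z \<noteq> 0" "y \<noteq> 0" "complex_of_real y \<noteq> z"
  shows "(z * dv0 \<alpha> z - of_real y * dv0 \<alpha> (of_real y)) / (z - of_real y) * of_real g = 1 * of_real g"
proof -
  have "z - of_real y \<noteq> 0" using assms by simp
  moreover have "complex_of_real y \<noteq> 0" using assms by simp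
  ultimately show ?thesis using assms(1) unfolding dv0_def
    by (simp add: field_simps)
qed

lemma CR1: "(1/h)*(\<alpha>*J) = 1 - (SR::real) \<Longrightarrow> complex_of_real (1/h) * (of_real \<alpha> / z * of_real J) = (1 - of_real SR) / z"
proof -
  assume r: "(1/h)*(\<alpha>*J) = 1 - (SR::real)"
  have "complex_of_real (1/h) * (of_real \<alpha> / z * of_real J) = of_real ((1/h)*(\<alpha>*J)) / z"
    by (simp add: of_real_mult mult_ac)
  also have "\<dots> = (1 - of_real SR) / z" unfolding r by simp
  finally show ?thesis .
qed
lemma CR2: "(1/hp)*(\<alpha>*J) = - (real n + (Sr::real)) \<Longrightarrow> complex_of_real (1/hp) * (of_real \<alpha> / z * of_real J) = - (of_nat n + of_real Sr) / z"
proof -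
  assume r: "(1/hp)*(\<alpha>*J) = - (real n + (Sr::real))"
  have "complex_of_real (1/hp) * (of_real \<alpha> / z * of_real J) = of_real ((1/hp)*(\<alpha>*J)) / z"
    by (simp add: of_real_mult mult_ac)
  also have "\<dots> = - (of_nat n + of_real Sr) / z" unfolding r by simp
  finally show ?thesis .
qed



theorem lemma2p4:
  fixes \<alpha> :: real and m :: nat and \<omega> t :: "nat \<Rightarrow> real" and P :: "nat \<Rightarrow> real poly"
  assumes "m \<ge> 1" and "\<alpha> > -1"
    and "0 < t 1" and "\<forall>k. 1 \<le> k \<and> k < m \<longrightarrow> t k < t (Suc k)"
    and "\<forall>l\<le>m. (\<Sum>k\<le>l. \<omega> k) \<ge> 0"
    and "\<exists>l\<le>m. (\<Sum>k\<le>l. \<omega> k) > 0"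
    and "\<forall>n. degree (P n) = n \<and> lead_coeff (P n) = 1"
    and "\<forall>i j. i \<noteq> j \<longrightarrow>
           (LINT y:{0..}|lborel. poly (P i) y * poly (P j) y * wt \<alpha> m \<omega> t y) = 0"
  shows "\<forall>n. \<forall>z::complex. z \<noteq> 0 \<and> (\<forall>k\<in>{1..m}. z \<noteq> of_real (t k)) \<longrightarrow>
      An \<alpha> m \<omega> t P n z =
        (1 - (\<Sum>k=1..m. of_real (Rnk \<alpha> m \<omega> t P n k))) / z
        + (\<Sum>k=1..m. of_real (Rnk \<alpha> m \<omega> t P n k) / (z - of_real (t k)))
    \<and> Bn \<alpha> m \<omega> t P n z =
        - (of_nat n + (\<Sum>k=1..m. of_real (rnk \<alpha> m \<omega> t P n k))) / z
        + (\<Sum>k=1..m. of_real (rnk \<alpha> m \<omega> t P n k) / (z - of_real (t k)))"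
proof (intro allI impI)
  fix n and z :: complex
  assume zz: "z \<noteq> 0 \<and> (\<forall>k\<in>{1..m}. z \<noteq> of_real (t k))"
  hence z0: "z \<noteq> 0" by auto
  note a1 = assms(2) and mon = assms(7) and ort = assms(8)
  have tpos: "\<forall>k\<in>{1..m}. t k > 0"
  proof
    fix k assume k: "k \<in> {1..m}"
    show "t k > 0"
    proof (cases "k = 1")
      case True thus ?thesis using assms(3) by simp
    next
      case False thus ?thesis using tmono[OF assms(4), of 1 k] k assms(3) by auto
    qed
  qed
  hence tnn: "\<forall>k\<in>{1..m}. t k \<ge> 0" by auto
  have Pnz: "P j \<noteq> 0" for j using mon[rule_format, of j] by auto
  have hposj: "hn \<alpha> m \<omega> t P j > 0" for j
    unfolding hn_def by (rule h_pos[OF a1 assms(3) assms(4) assms(5) assms(6) Pnz])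
  define h where "h = hn \<alpha> m \<omega> t P n"
  have hpos: "h > 0" unfolding h_def by (rule hposj)
  have ex: "y \<in> {0..} \<Longrightarrow> y \<notin> {0, Re z} \<Longrightarrow> y \<noteq> 0 \<and> complex_of_real y \<noteq> z" for y
    by auto
  have orthQ: "(LINT y:{0..}|lborel. poly Q y * poly (P j) y * wt \<alpha> m \<omega> t y) = 0"
    if "\<forall>i\<ge>j. coeff Q i = 0" for Q j
    by (rule orth[OF a1 tnn mon ort coeff_aux[OF that]])
  have pd: "\<forall>i\<ge>j. coeff (pderiv (P j)) i = 0" for j
  proof (intro allI impI)
    fix i assume "j \<le> i"
    hence "coeff (P j) (Suc i) = 0" using mon by (auto intro: coeff_eq_0)
    thus "coeff (pderiv (P j)) i = 0" by (simp add: coeff_pderiv)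
  qed
  define SR where "SR = (\<Sum>k=1..m. Rnk \<alpha> m \<omega> t P n k)"
  define Sr where "Sr = (\<Sum>k=1..m. rnk \<alpha> m \<omega> t P n k)"
  have SRc: "(\<Sum>k=1..m. complex_of_real (Rnk \<alpha> m \<omega> t P n k)) = of_real SR" by (simp add: SR_def)
  have Src: "(\<Sum>k=1..m. complex_of_real (rnk \<alpha> m \<omega> t P n k)) = of_real Sr" by (simp add: Sr_def)
  define BC where "BC = (\<Sum>k=1..m. complex_of_real (rnk \<alpha> m \<omega> t P n k) / (z - of_real (t k)))"
  define AC where "AC = (\<Sum>k=1..m. complex_of_real (Rnk \<alpha> m \<omega> t P n k) / (z - of_real (t k)))"
  have Bn0: "Bn \<alpha> m \<omega> t P 0 z = 0"
    by (simp add: Bn_def Pprev_def rnk_def)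
  show "An \<alpha> m \<omega> t P n z =
        (1 - (\<Sum>k=1..m. of_real (Rnk \<alpha> m \<omega> t P n k))) / z
        + (\<Sum>k=1..m. of_real (Rnk \<alpha> m \<omega> t P n k) / (z - of_real (t k)))
    \<and> Bn \<alpha> m \<omega> t P n z =
        - (of_nat n + (\<Sum>k=1..m. of_real (rnk \<alpha> m \<omega> t P n k))) / z
        + (\<Sum>k=1..m. of_real (rnk \<alpha> m \<omega> t P n k) / (z - of_real (t k)))"
    unfolding SRc Src AC_def[symmetric] BC_def[symmetric]
  proof (cases "\<alpha> > 0")
    case True
    show "An \<alpha> m \<omega> t P n z = (1 - of_real SR) / z + AC \<and> Bn \<alpha> m \<omega> t P n z = - (of_nat n + of_real Sr) / z + BC"
    proof
      define J where "J = (LINT y:{0..}|lborel. poly (P n * P n) y / y * wt \<alpha> m \<omega> t y)"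
      have LA: "(LINT y:{0..}|lborel. ((dv0 \<alpha> z - dv0 \<alpha> (of_real y)) / (z - of_real y)) *
             of_real ((poly (P n) y)\<^sup>2 * wt \<alpha> m \<omega> t y)) = of_real \<alpha> / z * of_real J"
      proof -
        have "(LINT y:{0..}|lborel. ((dv0 \<alpha> z - dv0 \<alpha> (of_real y)) / (z - of_real y)) *
             of_real ((poly (P n) y)\<^sup>2 * wt \<alpha> m \<omega> t y)) =
             (LINT y:{0..}|lborel. of_real \<alpha> / z * of_real (poly (P n * P n) y / y * wt \<alpha> m \<omega> t y))"
        proof (rule lint_cong_fin[where X="{0, Re z}"], simp)
          fix y :: real assume "y \<in> {0..}" "y \<notin> {0, Re z}"
          hence "y \<noteq> 0" "complex_of_real y \<noteq> z" using ex by auto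
          thus "((dv0 \<alpha> z - dv0 \<alpha> (of_real y)) / (z - of_real y)) * of_real ((poly (P n) y)\<^sup>2 * wt \<alpha> m \<omega> t y)
            = of_real \<alpha> / z * of_real (poly (P n * P n) y / y * wt \<alpha> m \<omega> t y)"
            by (subst K1[OF z0]) (auto simp: power2_eq_square)
        qed
        thus ?thesis by (simp only: cint J_def)
      qed
      have IX: "(LINT y:{0..}|lborel. poly (P n * P n) y * wt \<alpha> m \<omega> t y) = h"
        unfolding h_def hn_def by (simp add: power2_eq_square)
      have ID: "(LINT y:{0..}|lborel. poly (pderiv (P n * P n)) y * wt \<alpha> m \<omega> t y) = 0"
      proof -
        have "(LINT y:{0..}|lborel. poly (pderiv (P n * P n)) y * wt \<alpha> m \<omega> t y) =
          (LINT y:{0..}|lborel. 2 * (poly (pderiv (P n)) y * poly (P n) y * wt \<alpha> m \<omega> t y))"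
          by (simp add: pderiv_mult algebra_simps)
        also have "\<dots> = 0" using orthQ[OF pd] by simp
        finally show ?thesis .
      qed
      have "\<alpha> * J = h - 0 - (\<Sum>k=1..m. \<omega> k * w0 \<alpha> (t k) * poly (P n * P n) (t k))"
        using IBP[OF True tnn, of "P n * P n" \<omega>] unfolding J_def IX ID .
      moreover have "SR = (\<Sum>k=1..m. \<omega> k * w0 \<alpha> (t k) * poly (P n * P n) (t k)) / h"
        unfolding SR_def Rnk_def h_def[symmetric] sum_divide_distrib
        by (rule sum.cong) (simp_all add: power2_eq_square)
      ultimately have "(1/h) * (\<alpha> * J) = 1 - SR"
        using hpos by (simp add: diff_divide_distrib)
      hence "complex_of_real (1/h) * (of_real \<alpha> / z * of_real J) = (1 - of_real SR) / z"
        by (rule CR1)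
      thus "An \<alpha> m \<omega> t P n z = (1 - of_real SR) / z + AC"
        unfolding An_def AC_def using True LA by (simp add: h_def)
    next
      show "Bn \<alpha> m \<omega> t P n z = - (of_nat n + of_real Sr) / z + BC"
      proof (cases n)
        case 0 thus ?thesis using Bn0 by (simp add: Sr_def BC_def rnk_def)
      next
        case (Suc N)
        have PP: "Pprev P n = P N" using Suc by (simp add: Pprev_def)
        define hp where "hp = hn \<alpha> m \<omega> t P N"
        have hpp: "hprev \<alpha> m \<omega> t P n = hp" unfolding hp_def hprev_def hn_def PP ..
        have hppos: "hp > 0" unfolding hp_def by (rule hposj)
        define J where "J = (LINT y:{0..}|lborel. poly (P n * P N) y / y * wt \<alpha> m \<omega> t y)"
        have LB: "(LINT y:{0..}|lborel. ((dv0 \<alpha> z - dv0 \<alpha> (of_real y)) / (z - of_real y)) *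
             of_real (poly (P n) y * poly (P N) y * wt \<alpha> m \<omega> t y)) = of_real \<alpha> / z * of_real J"
        proof -
          have "(LINT y:{0..}|lborel. ((dv0 \<alpha> z - dv0 \<alpha> (of_real y)) / (z - of_real y)) *
               of_real (poly (P n) y * poly (P N) y * wt \<alpha> m \<omega> t y)) =
               (LINT y:{0..}|lborel. of_real \<alpha> / z * of_real (poly (P n * P N) y / y * wt \<alpha> m \<omega> t y))"
          proof (rule lint_cong_fin[where X="{0, Re z}"], simp)
            fix y :: real assume "y \<in> {0..}" "y \<notin> {0, Re z}"
            hence "y \<noteq> 0" "complex_of_real y \<noteq> z" using ex by auto
            thus "((dv0 \<alpha> z - dv0 \<alpha> (of_real y)) / (z - of_real y)) * of_real (poly (P n) y * poly (P N) y * wt \<alpha> m \<omega> t y)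
              = of_real \<alpha> / z * of_real (poly (P n * P N) y / y * wt \<alpha> m \<omega> t y)"
              by (subst K1[OF z0]) (auto simp: mult_ac)
          qed
          thus ?thesis by (simp only: cint J_def)
        qed
        have IX: "(LINT y:{0..}|lborel. poly (P n * P N) y * wt \<alpha> m \<omega> t y) = 0"
          using ort[rule_format, of n N] Suc by simp
        define R where "R = pderiv (P n) - smult (of_nat (Suc N)) (P N)"
        have Rc: "\<forall>j\<ge>N. coeff R j = 0" unfolding R_def
          by (rule pderiv_mon) (use mon[rule_format, of n] mon[rule_format, of N] Suc in metis)+
        have ID: "(LINT y:{0..}|lborel. poly (pderiv (P n * P N)) y * wt \<alpha> m \<omega> t y) = real n * hp"
        proof -
          have e: "poly (pderiv (P n * P N)) y * wt \<alpha> m \<omega> t y =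
            (poly (pderiv (P N)) y * poly (P n) y * wt \<alpha> m \<omega> t y
             + real (Suc N) * (poly (P N) y * poly (P N) y * wt \<alpha> m \<omega> t y))
             + poly R y * poly (P N) y * wt \<alpha> m \<omega> t y" for y
            by (simp add: R_def pderiv_mult algebra_simps)
          have i1: "set_integrable lborel {0..} (\<lambda>y. poly (pderiv (P N)) y * poly (P n) y * wt \<alpha> m \<omega> t y
             + real (Suc N) * (poly (P N) y * poly (P N) y * wt \<alpha> m \<omega> t y))"
            by (intro set_integral_add(1) set_integrable_mult_right wtint2[OF a1 tnn])
          have "(LINT y:{0..}|lborel. poly (pderiv (P n * P N)) y * wt \<alpha> m \<omega> t y) =
            ((LINT y:{0..}|lborel. poly (pderiv (P N)) y * poly (P n) y * wt \<alpha> m \<omega> t y)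
            + (LINT y:{0..}|lborel. real (Suc N) * (poly (P N) y * poly (P N) y * wt \<alpha> m \<omega> t y)))
            + (LINT y:{0..}|lborel. poly R y * poly (P N) y * wt \<alpha> m \<omega> t y)"
            unfolding e
            by (simp only: set_integral_add(2)[OF i1 wtint2[OF a1 tnn]]
                set_integral_add(2)[OF wtint2[OF a1 tnn] set_integrable_mult_right[OF wtint2[OF a1 tnn]]])
          also have "(LINT y:{0..}|lborel. poly (pderiv (P N)) y * poly (P n) y * wt \<alpha> m \<omega> t y) = 0"
            by (rule orthQ) (use pd[of N] Suc in auto)
          also have "(LINT y:{0..}|lborel. poly R y * poly (P N) y * wt \<alpha> m \<omega> t y) = 0"
            by (rule orthQ[OF Rc])
          also have "(LINT y:{0..}|lborel. real (Suc N) * (poly (P N) y * poly (P N) y * wt \<alpha> m \<omega> t y))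
              = real n * hp"
            unfolding hp_def hn_def using Suc by (simp add: power2_eq_square)
          finally show ?thesis by simp
        qed
        have "\<alpha> * J = 0 - real n * hp - (\<Sum>k=1..m. \<omega> k * w0 \<alpha> (t k) * poly (P n * P N) (t k))"
          using IBP[OF True tnn, of "P n * P N" \<omega>] unfolding J_def IX ID .
        moreover have "Sr = (\<Sum>k=1..m. \<omega> k * w0 \<alpha> (t k) * poly (P n * P N) (t k)) / hp"
          unfolding Sr_def rnk_def hpp PP sum_divide_distrib
          by (rule sum.cong) (simp_all add: Suc)
        ultimately have "(1/hp) * (\<alpha> * J) = - (real n + Sr)"
          using hppos by (simp add: diff_divide_distrib add_divide_distrib)
        hence "complex_of_real (1/hp) * (of_real \<alpha> / z * of_real J) = - (of_nat n + of_real Sr) / z"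
          by (rule CR2)
        thus ?thesis
          unfolding Bn_def BC_def using True LB by (simp add: hpp PP)
      qed
    qed
  next
    case False
    show "An \<alpha> m \<omega> t P n z = (1 - of_real SR) / z + AC \<and> Bn \<alpha> m \<omega> t P n z = - (of_nat n + of_real Sr) / z + BC"
    proof
      have LA: "(LINT y:{0..}|lborel. ((z * dv0 \<alpha> z - of_real y * dv0 \<alpha> (of_real y)) / (z - of_real y)) *
             of_real ((poly (P n) y)\<^sup>2 * wt \<alpha> m \<omega> t y)) = of_real h"
      proof -
        have "(LINT y:{0..}|lborel. ((z * dv0 \<alpha> z - of_real y * dv0 \<alpha> (of_real y)) / (z - of_real y)) *
             of_real ((poly (P n) y)\<^sup>2 * wt \<alpha> m \<omega> t y)) =
             (LINT y:{0..}|lborel. 1 * of_real ((poly (P n) y)\<^sup>2 * wt \<alpha> m \<omega> t y))"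
        proof (rule lint_cong_fin[where X="{0, Re z}"], simp)
          fix y :: real assume "y \<in> {0..}" "y \<notin> {0, Re z}"
          hence "y \<noteq> 0" "complex_of_real y \<noteq> z" using ex by auto
          thus "((z * dv0 \<alpha> z - of_real y * dv0 \<alpha> (of_real y)) / (z - of_real y)) * of_real ((poly (P n) y)\<^sup>2 * wt \<alpha> m \<omega> t y)
            = 1 * of_real ((poly (P n) y)\<^sup>2 * wt \<alpha> m \<omega> t y)"
            by (rule K2[OF z0])
        qed
        thus ?thesis by (simp only: cint h_def hn_def) simp
      qed
      have "complex_of_real (1/h) * of_real h = 1" using hpos by (simp flip: of_real_mult)
      moreover have "An \<alpha> m \<omega> t P n z = (1/z) * (complex_of_real (1/h) * of_real h - (\<Sum>k=1..m. of_real (Rnk \<alpha> m \<omega> t P n k))) + AC"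
        unfolding An_def AC_def h_def[symmetric] by (subst if_not_P[OF False], subst LA, rule refl)
      ultimately show "An \<alpha> m \<omega> t P n z = (1 - of_real SR) / z + AC"
        unfolding SRc by simp
    next
      have LB: "(LINT y:{0..}|lborel. ((z * dv0 \<alpha> z - of_real y * dv0 \<alpha> (of_real y)) / (z - of_real y)) *
             of_real (poly (P n) y * poly (Pprev P n) y * wt \<alpha> m \<omega> t y)) = 0"
      proof -
        have "(LINT y:{0..}|lborel. ((z * dv0 \<alpha> z - of_real y * dv0 \<alpha> (of_real y)) / (z - of_real y)) *
             of_real (poly (P n) y * poly (Pprev P n) y * wt \<alpha> m \<omega> t y)) =
             (LINT y:{0..}|lborel. 1 * of_real (poly (P n) y * poly (Pprev P n) y * wt \<alpha> m \<omega> t y))"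
        proof (rule lint_cong_fin[where X="{0, Re z}"], simp)
          fix y :: real assume "y \<in> {0..}" "y \<notin> {0, Re z}"
          hence "y \<noteq> 0" "complex_of_real y \<noteq> z" using ex by auto
          thus "((z * dv0 \<alpha> z - of_real y * dv0 \<alpha> (of_real y)) / (z - of_real y)) * of_real (poly (P n) y * poly (Pprev P n) y * wt \<alpha> m \<omega> t y)
            = 1 * of_real (poly (P n) y * poly (Pprev P n) y * wt \<alpha> m \<omega> t y)"
            by (rule K2[OF z0])
        qed
        also have "\<dots> = of_real (LINT y:{0..}|lborel. poly (P n) y * poly (Pprev P n) y * wt \<alpha> m \<omega> t y)"
          by (simp only: cint) simp
        also have "(LINT y:{0..}|lborel. poly (P n) y * poly (Pprev P n) y * wt \<alpha> m \<omega> t y) = 0"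
          using ort[rule_format, of n "n - 1"] by (cases n) (auto simp: Pprev_def)
        finally show ?thesis by simp
      qed
      show "Bn \<alpha> m \<omega> t P n z = - (of_nat n + of_real Sr) / z + BC"
        unfolding Bn_def BC_def Sr_def using False LB z0 by (simp add: field_simps)
    qed
  qed
qed


end
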